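(* Let $(W,S)$ be a Coxeter system with $S$ finite, $\Phi_W$ its root system viewed as a rack with $\alpha\ast\beta=t_\beta(\alpha)$, and $p:\Phi_W\to Q_W$ the map $\alpha\mapsto t_\alpha$. Then $p$ induces an isomorphism $\operatorname{Ad}(\Phi_W)\cong\operatorname{Ad}(Q_W)$, given by $e_\alpha\mapsto e_{p(\alpha)}$.
   Context: A Coxeter system $(W,S)$: $S$ finite, $m:S\times S\to\mathbb{N}\cup\{\infty\}$ with $m(s,s)=1$, $2\le m(s,t)=m(t,s)\le\infty$ for $s\ne t$, $W=\langle s\in S\mid (st)^{m(s,t)}=1\ (m(s,t)<\infty)\rangle$. Let $V$ be the real vector space with basis $\{\alpha_s\mid s\in S\}$ and $B$ the symmetric bilinear form with $B(\alpha_s,\alpha_t)=-\cos(\pi/m(s,t))$ (interpreted as $-1$ when $m(s,t)=\infty$). The geometric representation $\sigma:W\to GL(V)$ sends $s$ to $\sigma_s(\lambda)=\lambda-2B(\alpha_s,\lambda)\alpha_s$; it is faithful and preserves $B$, and elements of $\sigma(W)$ are identified with elements of $W$. The root system is $\Phi_W=\{w(\alpha_s)\mid s\in S,w\in W\}$, and for $\alpha\in\Phi_W$, $t_\alpha(\lambda)=\lambda-2B(\alpha,\lambda)\alpha$, which is an element of $W$ lying in $Q_W$. A rack is a set $X$ with a binary operation $\ast$ such that $(x\ast y)\ast z=(x\ast z)\ast(y\ast z)$ and each map $x\mapsto x\ast y$ is bijective; a quandle is a rack with $x\ast x=x$. The Coxeter quandle is $Q_W=\bigcup_{w\in W}w^{-1}Sw$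 with $x\ast y=yxy$. For a rack or quandle $X$, $\operatorname{Ad}(X)=\langle e_x\ (x\in X)\mid e_y^{-1}e_xe_y=e_{x\ast y}\ (x,y\in X)\rangle$. *)

theory Defs
  imports Complex_Main "HOL-Library.Extended_Nat" "HOL-Algebra.Group"
begin

text \<open>The generating set S is the (finite) type 's. A Coxeter matrix is
 m :: 's => 's => enat, where the value infinity means m(s,t) = infinity.\<close>

definition coxeter_matrix :: "('s::finite \<Rightarrow> 's \<Rightarrow> enat) \<Rightarrow> bool" where
  "coxeter_matrix m \<longleftrightarrow>
     (\<forall>s. m s s = 1) \<and>
     (\<forall>s t. m s t = m t s) \<and>
     (\<forall>s t. s \<noteq> t \<longrightarrow> 2 \<le> m s t)"

text \<open>V = real vector space with basis alpha_s (s in S), modelled as 's => real.\<close>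

definition simple_root :: "'s \<Rightarrow> ('s \<Rightarrow> real)" where
  "simple_root s = (\<lambda>t. if t = s then 1 else 0)"

definition bcoef :: "('s \<Rightarrow> 's \<Rightarrow> enat) \<Rightarrow> 's \<Rightarrow> 's \<Rightarrow> real" where
  "bcoef m s t = (case m s t of enat k \<Rightarrow> - cos (pi / real k) | \<infinity> \<Rightarrow> -1)"

definition coxB :: "('s::finite \<Rightarrow> 's \<Rightarrow> enat) \<Rightarrow> ('s \<Rightarrow> real) \<Rightarrow> ('s \<Rightarrow> real) \<Rightarrow> real" where
  "coxB m u v = (\<Sum>s\<in>UNIV. \<Sum>t\<in>UNIV. u s * v t * bcoef m s t)"

definition refl_map :: "('s::finite \<Rightarrow> 's \<Rightarrow> enat) \<Rightarrow> ('s \<Rightarrow> real) \<Rightarrow> ('s \<Rightarrow> real) \<Rightarrow> ('s \<Rightarrow> real)" where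
  "refl_map m a v = (\<lambda>t. v t - 2 * coxB m a v * a t)"

definition sigma :: "('s::finite \<Rightarrow> 's \<Rightarrow> enat) \<Rightarrow> 's \<Rightarrow> ('s \<Rightarrow> real) \<Rightarrow> ('s \<Rightarrow> real)" where
  "sigma m s = refl_map m (simple_root s)"

text \<open>W, identified with its (faithful) image sigma(W) in GL(V): the group
 generated by the sigma_s (each sigma_s is an involution, so the monoid
 generated is already the group).\<close>
inductive_set coxW :: "('s::finite \<Rightarrow> 's \<Rightarrow> enat) \<Rightarrow> (('s \<Rightarrow> real) \<Rightarrow> ('s \<Rightarrow> real)) set"
  for m where
    id_in: "id \<in> coxW m"
  | step: "w \<in> coxW m \<Longrightarrow> sigma m s \<circ> w \<in> coxW m"

definition roots :: "('s::finite \<Rightarrow> 's \<Rightarrow> enat) \<Rightarrow> ('s \<Rightarrow> real) set" where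
  "roots m = {w (simple_root s) | w s. w \<in> coxW m}"

definition coxQ :: "('s::finite \<Rightarrow> 's \<Rightarrow> enat) \<Rightarrow> (('s \<Rightarrow> real) \<Rightarrow> ('s \<Rightarrow> real)) set" where
  "coxQ m = {inv_into UNIV w \<circ> sigma m s \<circ> w | w s. w \<in> coxW m}"

definition root_op :: "('s::finite \<Rightarrow> 's \<Rightarrow> enat) \<Rightarrow> ('s \<Rightarrow> real) \<Rightarrow> ('s \<Rightarrow> real) \<Rightarrow> ('s \<Rightarrow> real)" where
  "root_op m a b = refl_map m b a"

definition quandle_op :: "('v \<Rightarrow> 'v) \<Rightarrow> ('v \<Rightarrow> 'v) \<Rightarrow> ('v \<Rightarrow> 'v)" where
  "quandle_op x y = y \<circ> x \<circ> y"

text \<open>Words in the generators e_x^{\<pm>1}: (x, True) stands for e_x, (x, False) for e_x^{-1}.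
 ad_eq is the congruence on words generated by free cancellation and the
 relations e_y^{-1} e_x e_y = e_{x*y}.\<close>

inductive ad_eq :: "'a set \<Rightarrow> ('a \<Rightarrow> 'a \<Rightarrow> 'a) \<Rightarrow> ('a \<times> bool) list \<Rightarrow> ('a \<times> bool) list \<Rightarrow> bool"
  for X op where
    refl: "w \<in> lists (X \<times> UNIV) \<Longrightarrow> ad_eq X op w w"
  | sym: "ad_eq X op u v \<Longrightarrow> ad_eq X op v u"
  | trans: "ad_eq X op u v \<Longrightarrow> ad_eq X op v w \<Longrightarrow> ad_eq X op u w"
  | cancel: "x \<in> X \<Longrightarrow> u \<in> lists (X \<times> UNIV) \<Longrightarrow> v \<in> lists (X \<times> UNIV) \<Longrightarrow>
       ad_eq X op (u @ [(x, b), (x, \<not> b)] @ v) (u @ v)"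
  | rel: "x \<in> X \<Longrightarrow> y \<in> X \<Longrightarrow> u \<in> lists (X \<times> UNIV) \<Longrightarrow> v \<in> lists (X \<times> UNIV) \<Longrightarrow>
       ad_eq X op (u @ [(y, False), (x, True), (y, True)] @ v) (u @ [(op x y, True)] @ v)"

definition ad_class :: "'a set \<Rightarrow> ('a \<Rightarrow> 'a \<Rightarrow> 'a) \<Rightarrow> ('a \<times> bool) list \<Rightarrow> ('a \<times> bool) list set" where
  "ad_class X op w = {v. ad_eq X op w v}"

definition Ad :: "'a set \<Rightarrow> ('a \<Rightarrow> 'a \<Rightarrow> 'a) \<Rightarrow> (('a \<times> bool) list set) monoid" where
  "Ad X op = \<lparr> carrier = ad_class X op ` lists (X \<times> UNIV),
               mult = (\<lambda>A B. {w. \<exists>a\<in>A. \<exists>b\<in>B. ad_eq X op (a @ b) w}),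
               one = ad_class X op [] \<rparr>"

definition ad_gen :: "'a set \<Rightarrow> ('a \<Rightarrow> 'a \<Rightarrow> 'a) \<Rightarrow> 'a \<Rightarrow> ('a \<times> bool) list set" where
  "ad_gen X op x = ad_class X op [(x, True)]"

end

theory Submission
  imports Defs
begin


definition mapw :: "('a \<Rightarrow> 'b) \<Rightarrow> ('a \<times> bool) list \<Rightarrow> ('b \<times> bool) list" where
  "mapw f = map (\<lambda>(x,b). (f x, b))"

lemma mapw_simps[simp]: "mapw f [] = []" "mapw f ((x,b)#w) = (f x, b) # mapw f w"
  "mapw f (u @ v) = mapw f u @ mapw f v"
  by (auto simp: mapw_def)

lemma set_mapw[simp]: "set (mapw f w) = (\<lambda>(x,b). (f x, b)) ` set w"
  by (auto simp: mapw_def)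

lemma mapw_lists: "w \<in> lists (X \<times> UNIV) \<Longrightarrow> (\<forall>x\<in>X. f x \<in> Y) \<Longrightarrow> mapw f w \<in> lists (Y \<times> UNIV)"
  by (induction w) (auto simp: mapw_def)

lemma ad_eq_lists:
  assumes cl: "\<And>x y. x\<in>X \<Longrightarrow> y\<in>X \<Longrightarrow> op x y \<in> X"
  shows "ad_eq X op u v \<Longrightarrow> u \<in> lists (X\<times>UNIV) \<and> v \<in> lists (X\<times>UNIV)"
  by (induction rule: ad_eq.induct) (auto simp: cl)

lemma ad_eq_ctx:
  "ad_eq X op u v \<Longrightarrow> p \<in> lists (X\<times>UNIV) \<Longrightarrow> q \<in> lists (X\<times>UNIV) \<Longrightarrow> ad_eq X op (p@u@q) (p@v@q)"
proof (induction rule: ad_eq.induct)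
  case (refl w) then show ?case by (intro ad_eq.refl) auto
next
  case (sym u v) then show ?case by (blast intro: ad_eq.sym)
next
  case (trans u v w) then show ?case by (blast intro: ad_eq.trans)
next
  case (cancel x u v b)
  have "ad_eq X op ((p@u) @ [(x, b), (x, \<not> b)] @ (v@q)) ((p@u) @ (v@q))"
    by (rule ad_eq.cancel) (use cancel in auto)
  then show ?case by simp
next
  case (rel x y u v)
  have "ad_eq X op ((p@u) @ [(y, False), (x, True), (y, True)] @ (v@q)) ((p@u) @ [(op x y, True)] @ (v@q))"
    by (rule ad_eq.rel) (use rel in auto)
  then show ?case by simp
qed

lemma ad_eq_map:
  assumes fX: "\<And>x. x\<in>X \<Longrightarrow> f x \<in> Y"
    and fop: "\<And>x y. x\<in>X \<Longrightarrow> y\<in>X \<Longrightarrow> f (op x y) = op' (f x) (f y)"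
  shows "ad_eq X op u v \<Longrightarrow> ad_eq Y op' (mapw f u) (mapw f v)"
proof -
  have mL: "mapw f w \<in> lists (Y\<times>UNIV)" if "w \<in> lists (X\<times>UNIV)" for w
    using that fX by (intro mapw_lists) auto
  show "ad_eq X op u v \<Longrightarrow> ad_eq Y op' (mapw f u) (mapw f v)"
proof (induction rule: ad_eq.induct)
  case (refl w) then show ?case by (intro ad_eq.refl) (auto simp: mL fX)
next
  case (sym u v) then show ?case by (blast intro: ad_eq.sym)
next
  case (trans u v w) then show ?case by (blast intro: ad_eq.trans)
next
  case (cancel x u v b)
  have "ad_eq Y op' (mapw f u @ [(f x, b), (f x, \<not> b)] @ mapw f v) (mapw f u @ mapw f v)"
    by (rule ad_eq.cancel) (use cancel in \<open>auto simp: mL fX\<close>)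
  then show ?case by simp
next
  case (rel x y u v)
  have "ad_eq Y op' (mapw f u @ [(f y, False), (f x, True), (f y, True)] @ mapw f v) (mapw f u @ [(op' (f x) (f y), True)] @ mapw f v)"
    by (rule ad_eq.rel) (use rel in \<open>auto simp: mL fX\<close>)
  then show ?case using rel fop by simp
qed
qed

lemma ad_eq_map2:
  assumes fX: "\<And>x. x\<in>X \<Longrightarrow> f x \<in> Y"
    and fop: "\<And>x y. x\<in>X \<Longrightarrow> y\<in>X \<Longrightarrow> ad_eq Y op' [(f (op x y), True)] [(op' (f x) (f y), True)]"
  shows "ad_eq X op u v \<Longrightarrow> ad_eq Y op' (mapw f u) (mapw f v)"
proof -
  have mL: "mapw f w \<in> lists (Y\<times>UNIV)" if "w \<in> lists (X\<times>UNIV)" for w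
    using that fX by (intro mapw_lists) auto
  show "ad_eq X op u v \<Longrightarrow> ad_eq Y op' (mapw f u) (mapw f v)"
proof (induction rule: ad_eq.induct)
  case (refl w) then show ?case by (intro ad_eq.refl) (auto simp: mL fX)
next
  case (sym u v) then show ?case by (blast intro: ad_eq.sym)
next
  case (trans u v w) then show ?case by (blast intro: ad_eq.trans)
next
  case (cancel x u v b)
  have "ad_eq Y op' (mapw f u @ [(f x, b), (f x, \<not> b)] @ mapw f v) (mapw f u @ mapw f v)"
    by (rule ad_eq.cancel) (use cancel in \<open>auto simp: mL fX\<close>)
  then show ?case by simp
next
  case (rel x y u v)
  have U: "mapw f u \<in> lists (Y\<times>UNIV)" "mapw f v \<in> lists (Y\<times>UNIV)"
    using rel by (auto simp: mL fX)
  have 1: "ad_eq Y op' (mapw f u @ [(f y, False), (f x, True), (f y, True)] @ mapw f v) (mapw f u @ [(op' (f x) (f y), True)] @ mapw f v)"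
    by (rule ad_eq.rel) (use rel U in \<open>auto intro!: fX\<close>)
  have 2: "ad_eq Y op' (mapw f u @ [(op' (f x) (f y), True)] @ mapw f v) (mapw f u @ [(f (op x y), True)] @ mapw f v)"
    by (rule ad_eq_ctx[OF ad_eq.sym[OF fop]]) (use rel U in auto)
  show ?case using ad_eq.trans[OF 1 2] by simp
qed
qed

lemma ad_letter:
  assumes "z \<in> X" "x \<in> X" "ad_eq X op [(z, True)] [(x, True)]"
  shows "ad_eq X op [(z, b)] [(x, b)]"
proof (cases b)
  case True then show ?thesis using assms by simp
next
  case False
  have 1: "ad_eq X op [(z, False)] [(z,False),(x,True),(x,False)]"
    using ad_eq.sym[OF ad_eq.cancel[of x X "[(z,False)]" "[]" op True]] assms by simp
  have 2: "ad_eq X op [(z,False),(x,True),(x,False)] [(z,False),(z,True),(x,False)]"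
    using ad_eq_ctx[OF ad_eq.sym[OF assms(3)], of "[(z,False)]" "[(x,False)]"] assms by simp
  have 3: "ad_eq X op [(z,False),(z,True),(x,False)] [(x,False)]"
    using ad_eq.cancel[of z X "[]" "[(x,False)]" op False] assms by simp
  show ?thesis using False ad_eq.trans[OF ad_eq.trans[OF 1 2] 3] by simp
qed

lemma ad_class_eq:
  assumes "a \<in> lists (X\<times>UNIV)" "b \<in> lists (X\<times>UNIV)"
  shows "ad_class X op a = ad_class X op b \<longleftrightarrow> ad_eq X op a b"
proof
  assume "ad_class X op a = ad_class X op b"
  moreover have "b \<in> ad_class X op b" using assms by (auto simp: ad_class_def intro: ad_eq.refl)
  ultimately show "ad_eq X op a b" by (auto simp: ad_class_def)
next
  assume "ad_eq X op a b"
  then show "ad_class X op a = ad_class X op b"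
    by (auto simp: ad_class_def intro: ad_eq.trans ad_eq.sym)
qed

lemma ad_mult_class:
  assumes cl: "\<And>x y. x\<in>X \<Longrightarrow> y\<in>X \<Longrightarrow> op x y \<in> X"
    and "a \<in> lists (X\<times>UNIV)" "b \<in> lists (X\<times>UNIV)"
  shows "mult (Ad X op) (ad_class X op a) (ad_class X op b) = ad_class X op (a @ b)"
proof -
  have "ad_eq X op (a@b) w" if "ad_eq X op a a'" "ad_eq X op b b'" "ad_eq X op (a'@b') w" for a' b' w
  proof -
    have L: "a' \<in> lists (X\<times>UNIV)" "b' \<in> lists (X\<times>UNIV)"
      using ad_eq_lists[OF cl that(1)] ad_eq_lists[OF cl that(2)] by auto
    have "ad_eq X op ([]@a@b) ([]@a'@b)" by (rule ad_eq_ctx) (use that assms in auto)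
    moreover have "ad_eq X op (a'@b@[]) (a'@b'@[])" by (rule ad_eq_ctx) (use that assms L in auto)
    ultimately show ?thesis using that(3) by (auto intro: ad_eq.trans)
  qed
  moreover have "a \<in> ad_class X op a" "b \<in> ad_class X op b"
    using assms by (auto simp: ad_class_def intro: ad_eq.refl)
  ultimately show ?thesis by (auto simp: Ad_def ad_class_def)
qed

lemma gf_words:
  assumes gf: "\<And>x b. x\<in>X \<Longrightarrow> ad_eq X op [(g (f x), b)] [(x, b)]"
    and gfX: "\<And>x. x\<in>X \<Longrightarrow> g (f x) \<in> X"
  shows "a \<in> lists (X\<times>UNIV) \<Longrightarrow> ad_eq X op (mapw g (mapw f a)) a"
proof (induction a)
  case Nil then show ?case by (auto intro: ad_eq.refl)
next
  case (Cons c a)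
  obtain x b where c: "c = (x,b)" by (cases c)
  have x: "x \<in> X" "a \<in> lists (X\<times>UNIV)" using Cons c by auto
  have R: "mapw g (mapw f a) \<in> lists (X\<times>UNIV)"
    using x by (auto; force intro: gfX)
  have 1: "ad_eq X op ([]@[(g (f x), b)]@mapw g (mapw f a)) ([]@[(x, b)]@mapw g (mapw f a))"
    by (rule ad_eq_ctx[OF gf]) (use x R in auto)
  have 2: "ad_eq X op ([(x, b)]@mapw g (mapw f a)@[]) ([(x, b)]@a@[])"
    by (rule ad_eq_ctx[OF Cons.IH]) (use x in auto)
  show ?case using ad_eq.trans[OF 1[simplified] 2[simplified]] c by simp
qed

lemma ad_iso_generic:
  assumes clX: "\<And>x y. x\<in>X \<Longrightarrow> y\<in>X \<Longrightarrow> op x y \<in> X"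
  and clY: "\<And>x y. x\<in>Y \<Longrightarrow> y\<in>Y \<Longrightarrow> op' x y \<in> Y"
  and fX: "\<And>x. x\<in>X \<Longrightarrow> f x \<in> Y"
  and fop: "\<And>x y. x\<in>X \<Longrightarrow> y\<in>X \<Longrightarrow> f (op x y) = op' (f x) (f y)"
  and gY: "\<And>y. y\<in>Y \<Longrightarrow> g y \<in> X"
  and gop: "\<And>x y. x\<in>Y \<Longrightarrow> y\<in>Y \<Longrightarrow> ad_eq X op [(g (op' x y), True)] [(op (g x) (g y), True)]"
  and gf: "\<And>x. x\<in>X \<Longrightarrow> ad_eq X op [(g (f x), True)] [(x, True)]"
  and fg: "\<And>y. y\<in>Y \<Longrightarrow> f (g y) = y"
  shows "\<exists>h. h \<in> iso (Ad X op) (Ad Y op') \<and> (\<forall>x\<in>X. h (ad_gen X op x) = ad_gen Y op' (f x))"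
proof -
  define h where "h A = {w. \<exists>a\<in>A. ad_eq Y op' (mapw f a) w}" for A
  have hc: "h (ad_class X op a) = ad_class Y op' (mapw f a)" if a: "a \<in> lists (X\<times>UNIV)" for a
  proof -
    have "a \<in> ad_class X op a" using a by (auto simp: ad_class_def intro: ad_eq.refl)
    moreover have "ad_eq Y op' (mapw f a) w" if "ad_eq X op a a'" "ad_eq Y op' (mapw f a') w" for a' w
      using ad_eq.trans[OF ad_eq_map[where X=X and Y=Y and f=f and op=op and op'=op', OF fX fop that(1)] that(2)] by blast
    ultimately show ?thesis by (auto simp: h_def ad_class_def)
  qed
  have mapfL: "mapw f a \<in> lists (Y\<times>UNIV)" if "a \<in> lists (X\<times>UNIV)" for a
    using that fX by (intro mapw_lists) auto
  have hom: "h \<in> hom (Ad X op) (Ad Y op')"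
  proof -
    have "h \<in> carrier (Ad X op) \<rightarrow> carrier (Ad Y op')"
    proof
      fix A assume "A \<in> carrier (Ad X op)"
      then obtain a where a: "a \<in> lists (X\<times>UNIV)" "A = ad_class X op a" by (auto simp: Ad_def)
      then have "h A = ad_class Y op' (mapw f a)" using hc by simp
      then show "h A \<in> carrier (Ad Y op')" using mapfL[OF a(1)] by (auto simp: Ad_def intro: rev_image_eqI)
    qed
    moreover have "h (A \<otimes>\<^bsub>Ad X op\<^esub> B) = h A \<otimes>\<^bsub>Ad Y op'\<^esub> h B"
      if AB: "A \<in> carrier (Ad X op)" "B \<in> carrier (Ad X op)" for A B
    proof -
      obtain a b where ab: "a \<in> lists (X\<times>UNIV)" "b \<in> lists (X\<times>UNIV)" "A = ad_class X op a" "B = ad_class X op b"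
        using AB by (auto simp: Ad_def)
      have "A \<otimes>\<^bsub>Ad X op\<^esub> B = ad_class X op (a@b)" using ad_mult_class[OF clX ab(1,2)] ab by simp
      moreover have "h A \<otimes>\<^bsub>Ad Y op'\<^esub> h B = ad_class Y op' (mapw f a @ mapw f b)"
        using ad_mult_class[OF clY mapfL[OF ab(1)] mapfL[OF ab(2)]] ab hc by simp
      ultimately show ?thesis using hc ab by simp
    qed
    ultimately show ?thesis by (auto simp: hom_def)
  qed
  have gfX: "g (f x) \<in> X" if "x \<in> X" for x using that fX gY by blast
  have gf2: "ad_eq X op [(g (f x), b)] [(x, b)]" if "x \<in> X" for x b
    using ad_letter[OF gfX[OF that] that gf[OF that]] .
  have inj: "inj_on h (carrier (Ad X op))"
  proof (rule inj_onI)
    fix A B assume "A \<in> carrier (Ad X op)" "B \<in> carrier (Ad X op)" "h A = h B"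
    then obtain a b where ab: "a \<in> lists (X\<times>UNIV)" "b \<in> lists (X\<times>UNIV)" "A = ad_class X op a" "B = ad_class X op b"
      and e: "h A = h B" by (auto simp: Ad_def)
    have "ad_eq Y op' (mapw f a) (mapw f b)"
      using e ab hc ad_class_eq[OF mapfL[OF ab(1)] mapfL[OF ab(2)]] by simp
    then have "ad_eq X op (mapw g (mapw f a)) (mapw g (mapw f b))"
      using ad_eq_map2[where X=Y and Y=X and f=g and op=op' and op'=op, OF gY gop] by blast
    then have "ad_eq X op a b"
      using gf_words[where X=X and op=op and g=g and f=f, OF gf2 gfX ab(1)] gf_words[where X=X and op=op and g=g and f=f, OF gf2 gfX ab(2)]
      by (meson ad_eq.sym ad_eq.trans)
    then show "A = B" using ab ad_class_eq by blast
  qed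
  have surj: "h ` carrier (Ad X op) = carrier (Ad Y op')"
  proof
    show "h ` carrier (Ad X op) \<subseteq> carrier (Ad Y op')" using hom by (auto simp: hom_def)
  next
    show "carrier (Ad Y op') \<subseteq> h ` carrier (Ad X op)"
    proof
      fix C assume "C \<in> carrier (Ad Y op')"
      then obtain c where c: "c \<in> lists (Y\<times>UNIV)" "C = ad_class Y op' c" by (auto simp: Ad_def)
      have gc: "mapw g c \<in> lists (X\<times>UNIV)" using c by (auto; force intro: gY)
      have "mapw f (mapw g c) = c" using c(1) by (induction c) (auto simp: fg)
      then have "h (ad_class X op (mapw g c)) = C" using hc[OF gc] c by simp
      moreover have "ad_class X op (mapw g c) \<in> carrier (Ad X op)" using gc by (auto simp: Ad_def)
      ultimately show "C \<in> h ` carrier (Ad X op)" by blast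
    qed
  qed
  have gen: "h (ad_gen X op x) = ad_gen Y op' (f x)" if "x \<in> X" for x
    using hc[of "[(x,True)]"] that by (simp add: ad_gen_def)
  show ?thesis
    using hom inj surj gen by (intro exI[of _ h]) (auto simp: iso_def bij_betw_def)
qed



lemma coxB_add_left: "coxB m (\<lambda>t. u t + c * v t) w = coxB m u w + c * coxB m v w"
  by (simp add: coxB_def algebra_simps sum.distrib sum_distrib_left)

lemma coxB_add_right: "coxB m w (\<lambda>t. u t + c * v t) = coxB m w u + c * coxB m w v"
  by (simp add: coxB_def algebra_simps sum.distrib sum_distrib_left)

lemma coxB_scale_left: "coxB m (\<lambda>t. c * v t) w = c * coxB m v w"
  by (simp add: coxB_def algebra_simps sum_distrib_left)

lemma coxB_scale_right: "coxB m w (\<lambda>t. c * v t) = c * coxB m w v"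
  by (simp add: coxB_def algebra_simps sum_distrib_left)

lemma coxB_sym: assumes "coxeter_matrix m" shows "coxB m u v = coxB m v u"
proof -
  have bs: "bcoef m s t = bcoef m t s" for s t using assms by (simp add: coxeter_matrix_def bcoef_def)
  show ?thesis unfolding coxB_def
    by (subst sum.swap) (simp add: bs mult.commute mult.left_commute)
qed

lemma coxB_simple: assumes "coxeter_matrix m" shows "coxB m (simple_root s) (simple_root s) = 1"
proof -
  have e: "simple_root s sa * simple_root s t * bcoef m sa t = (if sa = s then (if t = s then bcoef m s s else 0) else 0)" for sa t
    by (simp add: simple_root_def)
  have "coxB m (simple_root s) (simple_root s) = bcoef m s s"
  proof -
    have "(\<Sum>t\<in>UNIV. if sa = s then if t = s then bcoef m s s else 0 else 0) = (if sa = s then bcoef m s s else 0)" for sa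
      by (cases "sa = s") simp_all
    then show ?thesis unfolding coxB_def e by simp
  qed
  also have "\<dots> = 1" using assms by (simp add: coxeter_matrix_def bcoef_def one_enat_def)
  finally show ?thesis .
qed

lemma refl_map_alt: "refl_map m a v = (\<lambda>t. v t + (-2 * coxB m a v) * a t)"
  by (simp add: refl_map_def)

lemma refl_lin: "refl_map m a (\<lambda>t. u t + c * v t) = (\<lambda>t. refl_map m a u t + c * refl_map m a v t)"
  by (simp add: refl_map_def coxB_add_right algebra_simps)

lemma refl_B:
  assumes cm: "coxeter_matrix m" and aa: "coxB m a a = 1"
  shows "coxB m (refl_map m a u) (refl_map m a v) = coxB m u v"
proof -
  define c where "c = -2 * coxB m a u"
  define d where "d = -2 * coxB m a v"
  have "coxB m (refl_map m a u) (refl_map m a v) = coxB m (\<lambda>t. u t + c * a t) (\<lambda>t. v t + d * a t)"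
    by (simp add: refl_map_alt c_def d_def)
  also have "\<dots> = coxB m u v + d * coxB m u a + c * (coxB m a v + d * coxB m a a)"
    by (simp only: coxB_add_left coxB_add_right)
  also have "\<dots> = coxB m u v"
    using aa coxB_sym[OF cm, of u a] by (simp add: c_def d_def algebra_simps)
  finally show ?thesis .
qed

lemma refl_invol:
  assumes aa: "coxB m a a = 1"
  shows "refl_map m a (refl_map m a v) = v"
proof -
  define c where "c = -2 * coxB m a v"
  have "refl_map m a (refl_map m a v) = refl_map m a (\<lambda>t. v t + c * a t)" by (simp only: refl_map_alt c_def)
  also have "\<dots> = (\<lambda>t. v t + c * a t + (-2 * (coxB m a v + c * coxB m a a)) * a t)"
    by (simp only: refl_map_alt coxB_add_right)
  also have "\<dots> = v" using aa by (simp add: c_def fun_eq_iff algebra_simps)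
  finally show ?thesis .
qed

lemma W_comp: "w1 \<in> coxW m \<Longrightarrow> w2 \<in> coxW m \<Longrightarrow> w1 \<circ> w2 \<in> coxW m"
  by (induction w1 rule: coxW.induct) (auto simp: comp_assoc intro: coxW.step)

lemma W_sigma: "sigma m s \<in> coxW m"
  using coxW.step[OF coxW.id_in, of m s] by simp

definition Bpres where "Bpres m w \<longleftrightarrow> (\<forall>u v. coxB m (w u) (w v) = coxB m u v)"
definition Lin where "Lin w \<longleftrightarrow> (\<forall>u v (c::real). w (\<lambda>t. u t + c * v t) = (\<lambda>t. w u t + c * w v t))"

lemma W_props:
  assumes cm: "coxeter_matrix m"
  shows "w \<in> coxW m \<Longrightarrow> Bpres m w \<and> Lin w \<and> (\<exists>w'\<in>coxW m. w' \<circ> w = id \<and> w \<circ> w' = id)"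
proof (induction rule: coxW.induct)
  case id_in
  have "id \<in> coxW m" by (rule coxW.id_in)
  then show ?case unfolding Bpres_def Lin_def by (intro conjI bexI[of _ id]) simp_all
next
  case (step w s)
  have ss: "coxB m (simple_root s) (simple_root s) = 1" using coxB_simple[OF cm] .
  obtain w' where w': "w' \<in> coxW m" "w' \<circ> w = id" "w \<circ> w' = id" using step by blast
  have "Bpres m (sigma m s \<circ> w)"
    using step refl_B[OF cm ss] by (simp add: Bpres_def sigma_def)
  moreover have "Lin (sigma m s \<circ> w)"
    using step by (simp add: Lin_def sigma_def refl_lin)
  moreover have "w' \<circ> sigma m s \<in> coxW m" using W_comp[OF w'(1) W_sigma] .
  moreover have "(w' \<circ> sigma m s) \<circ> (sigma m s \<circ> w) = id"
  proof -
    have "(w' \<circ> sigma m s) \<circ> (sigma m s \<circ> w) = w' \<circ> w"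
      by (rule ext) (simp add: sigma_def refl_invol[OF ss])
    then show ?thesis using w' by simp
  qed
  moreover have "(sigma m s \<circ> w) \<circ> (w' \<circ> sigma m s) = id"
  proof (rule ext)
    fix x
    have "w (w' (sigma m s x)) = sigma m s x" using w'(3) by (metis comp_apply id_apply)
    then show "((sigma m s \<circ> w) \<circ> (w' \<circ> sigma m s)) x = id x"
      by (simp add: sigma_def refl_invol[OF ss])
  qed
  ultimately show ?case by blast
qed

lemma equivar:
  assumes cm: "coxeter_matrix m" and B: "Bpres m w" and L: "Lin w" and ww': "w \<circ> w' = id"
  shows "refl_map m (w a) = w \<circ> refl_map m a \<circ> w'"
proof (rule ext)
  fix v
  have wv: "w (w' v) = v" using ww' by (metis comp_apply id_apply)
  have Bw: "coxB m a (w' v) = coxB m (w a) v"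
    using B wv by (metis Bpres_def)
  have "(w \<circ> refl_map m a \<circ> w') v = w (\<lambda>t. w' v t + (-2 * coxB m a (w' v)) * a t)"
    by (simp only: refl_map_alt comp_apply)
  also have "\<dots> = (\<lambda>t. v t + (-2 * coxB m a (w' v)) * w a t)"
    by (simp only: L[unfolded Lin_def, rule_format] wv)
  also have "\<dots> = refl_map m (w a) v"
    by (simp only: refl_map_alt Bw)
  finally show "refl_map m (w a) v = (w \<circ> refl_map m a \<circ> w') v" by simp
qed

lemma refl_props:
  assumes cm: "coxeter_matrix m" and aa: "coxB m a a = 1"
  shows "Bpres m (refl_map m a)" "Lin (refl_map m a)" "refl_map m a \<circ> refl_map m a = id"
  using refl_B[OF cm aa] refl_lin refl_invol[OF aa] by (auto simp: Bpres_def Lin_def)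

lemma conj_refl:
  assumes cm: "coxeter_matrix m" and bb: "coxB m b b = 1"
  shows "refl_map m (refl_map m b a) = refl_map m b \<circ> refl_map m a \<circ> refl_map m b"
  using equivar[OF cm refl_props[OF cm bb]] .

lemma roots_norm:
  assumes cm: "coxeter_matrix m" and "a \<in> roots m" shows "coxB m a a = 1"
proof -
  obtain w s where "a = w (simple_root s)" "w \<in> coxW m" using assms(2) by (auto simp: roots_def)
  then show ?thesis using W_props[OF cm] coxB_simple[OF cm] by (auto simp: Bpres_def)
qed

lemma refl_root_W:
  assumes cm: "coxeter_matrix m" and "b \<in> roots m" shows "refl_map m b \<in> coxW m"
proof -
  obtain w s where b: "b = w (simple_root s)" "w \<in> coxW m" using assms(2) by (auto simp: roots_def)
  obtain w' where w': "w' \<in> coxW m" "w \<circ> w' = id" "Bpres m w" "Lin w" using W_props[OF cm b(2)] by blast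
  have "refl_map m b = w \<circ> sigma m s \<circ> w'"
    using equivar[OF cm w'(3,4,2)] b by (simp add: sigma_def)
  then show ?thesis using W_comp W_sigma b(2) w'(1) by metis
qed

lemma roots_closed:
  assumes cm: "coxeter_matrix m" and "a \<in> roots m" "b \<in> roots m"
  shows "root_op m a b \<in> roots m"
proof -
  obtain v r where a: "a = v (simple_root r)" "v \<in> coxW m" using assms(2) by (auto simp: roots_def)
  have "root_op m a b = (refl_map m b \<circ> v) (simple_root r)" using a by (simp add: root_op_def)
  moreover have "refl_map m b \<circ> v \<in> coxW m" using W_comp refl_root_W[OF cm assms(3)] a(2) by blast
  ultimately show ?thesis unfolding roots_def by blast
qed

lemma inv_W:
  assumes "w' \<circ> w = id" "w \<circ> w' = id" shows "inv_into UNIV w = w'"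
  using assms by (intro inv_equality) (metis comp_apply id_apply)+

lemma root_in_Q:
  assumes cm: "coxeter_matrix m" and "a \<in> roots m" shows "refl_map m a \<in> coxQ m"
proof -
  obtain w s where b: "a = w (simple_root s)" "w \<in> coxW m" using assms(2) by (auto simp: roots_def)
  obtain w' where w': "w' \<in> coxW m" "w' \<circ> w = id" "w \<circ> w' = id" "Bpres m w" "Lin w" using W_props[OF cm b(2)] by blast
  have "refl_map m a = w \<circ> sigma m s \<circ> w'"
    using equivar[OF cm w'(4,5,3)] b by (simp add: sigma_def)
  moreover have "inv_into UNIV w' = w" using inv_W w' by blast
  ultimately show ?thesis using w'(1) by (auto simp: coxQ_def)
qed

lemma Q_root:
  assumes cm: "coxeter_matrix m" and "x \<in> coxQ m" shows "\<exists>a\<in>roots m. refl_map m a = x"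
proof -
  obtain w s where x: "x = inv_into UNIV w \<circ> sigma m s \<circ> w" "w \<in> coxW m" using assms(2) by (auto simp: coxQ_def)
  obtain w' where w': "w' \<in> coxW m" "w' \<circ> w = id" "w \<circ> w' = id" using W_props[OF cm x(2)] by blast
  have wp: "Bpres m w'" "Lin w'" using W_props[OF cm w'(1)] by auto
  have "inv_into UNIV w = w'" using inv_W w' by blast
  then have "refl_map m (w' (simple_root s)) = x"
    using equivar[OF cm wp w'(2)] x by (simp add: sigma_def)
  moreover have "w' (simple_root s) \<in> roots m" using w'(1) by (auto simp: roots_def)
  ultimately show ?thesis by blast
qed

lemma refl_unique:
  assumes aa: "coxB m a a = 1" and bb: "coxB m b b = 1" and e: "refl_map m a = refl_map m b"
  shows "b = a \<or> b = (\<lambda>t. - a t)"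
proof -
  define c where "c = coxB m b a"
  have "refl_map m a a = refl_map m b a" using e by simp
  then have "\<forall>t. a t - 2 * a t = a t - 2 * c * b t"
    using aa by (simp add: refl_map_def c_def fun_eq_iff)
  then have ab: "a = (\<lambda>t. c * b t)" by (auto simp: fun_eq_iff)
  have "coxB m a a = c * c * coxB m b b"
    by (subst (1 2) ab) (simp add: coxB_scale_left coxB_scale_right)
  then have "c * c = 1" using aa bb by simp
  then have "c = 1 \<or> c = -1" by (metis mult_cancel_left1 square_eq_1_iff)
  then show ?thesis using ab by (auto simp: fun_eq_iff)
qed



lemma sign_root:
  assumes cm: "coxeter_matrix m" and r: "c \<in> roots m"
  shows "ad_eq (roots m) (root_op m) [((\<lambda>t. - c t), True)] [(c, True)]"
proof -
  have n: "root_op m c c = (\<lambda>t. - c t)"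
    using roots_norm[OF cm r] by (simp add: root_op_def refl_map_def fun_eq_iff)
  have 1: "ad_eq (roots m) (root_op m) ([] @ [(c,False),(c,True),(c,True)] @ []) ([] @ [(root_op m c c, True)] @ [])"
    by (rule ad_eq.rel) (use r in auto)
  have 2: "ad_eq (roots m) (root_op m) ([] @ [(c,False),(c,\<not>False)] @ [(c,True)]) ([] @ [(c,True)])"
    by (rule ad_eq.cancel) (use r in auto)
  show ?thesis using 1 2 n by simp (metis ad_eq.sym ad_eq.trans)
qed

theorem theorem6p3:
  fixes m :: "'s::finite \<Rightarrow> 's \<Rightarrow> enat"
  assumes "coxeter_matrix m"
  shows "\<exists>h. h \<in> iso (Ad (roots m) (root_op m)) (Ad (coxQ m) quandle_op) \<and>
             (\<forall>\<alpha>\<in>roots m. h (ad_gen (roots m) (root_op m) \<alpha>)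
                             = ad_gen (coxQ m) quandle_op (refl_map m \<alpha>))"
proof -
  note cm = assms
  define g where "g x = (SOME a. a \<in> roots m \<and> refl_map m a = x)" for x
  have gY: "g y \<in> roots m \<and> refl_map m (g y) = y" if yQ: "y \<in> coxQ m" for y
  proof -
    obtain a where "a \<in> roots m" "refl_map m a = y" using Q_root[OF cm yQ] by blast
    then show ?thesis unfolding g_def by (rule someI[where P="\<lambda>a. a \<in> roots m \<and> refl_map m a = y", OF conjI])
  qed
  have pm: "ad_eq (roots m) (root_op m) [(d,True)] [(c,True)]"
    if "d \<in> roots m" "c \<in> roots m" "refl_map m d = refl_map m c" for c d
  proof -
    have "d = c \<or> d = (\<lambda>t. - c t)"
      using refl_unique[OF roots_norm[OF cm that(2)] roots_norm[OF cm that(1)]] that(3) by simp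
    then show ?thesis
      using sign_root[OF cm that(2)] ad_eq.refl[of "[(c,True)]" "roots m" "root_op m"] that(2) by auto
  qed
  have fop: "refl_map m (root_op m x y) = quandle_op (refl_map m x) (refl_map m y)"
    if "x \<in> roots m" "y \<in> roots m" for x y
    using conj_refl[OF cm roots_norm[OF cm that(2)], of x] by (simp add: root_op_def quandle_op_def)
  show ?thesis
  proof (rule ad_iso_generic[where g=g])
    show "root_op m x y \<in> roots m" if "x \<in> roots m" "y \<in> roots m" for x y
      using roots_closed[OF cm that] .
    show "quandle_op x y \<in> coxQ m" if "x \<in> coxQ m" "y \<in> coxQ m" for x y
    proof -
      have "quandle_op x y = refl_map m (root_op m (g x) (g y))"
        using fop gY that by simp
      then show ?thesis using root_in_Q[OF cm roots_closed[OF cm]] gY that by simp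
    qed
    show "refl_map m x \<in> coxQ m" if "x \<in> roots m" for x using root_in_Q[OF cm that] .
    show "refl_map m (root_op m x y) = quandle_op (refl_map m x) (refl_map m y)"
      if "x \<in> roots m" "y \<in> roots m" for x y using fop that .
    show "g y \<in> roots m" if "y \<in> coxQ m" for y using gY that by blast
    show "ad_eq (roots m) (root_op m) [(g (quandle_op x y), True)] [(root_op m (g x) (g y), True)]"
      if "x \<in> coxQ m" "y \<in> coxQ m" for x y
    proof -
      have e: "quandle_op x y = refl_map m (root_op m (g x) (g y))"
        using fop gY that by simp
      have q: "quandle_op x y \<in> coxQ m" using e root_in_Q[OF cm roots_closed[OF cm]] gY that by simp
      show ?thesis
        by (rule pm) (use gY[OF q] e roots_closed[OF cm] gY that in auto)
    qed
    show "ad_eq (roots m) (root_op m) [(g (refl_map m x), True)] [(x, True)]" if "x \<in> roots m" for x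
      by (rule pm) (use gY[OF root_in_Q[OF cm that]] that in auto)
    show "refl_map m (g y) = y" if "y \<in> coxQ m" for y using gY that by blast
  qed
qed

end
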